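(* Let $t_1,t_2,t_3\in\mathbb{C}$ with $|t_1|=|t_2|$ and $|t_3|=1$, and let $H$ be the lattice operator with the rank-three coupling $B_3,A_3$ in which $S=0$. Then $[0,+\infty)\subset\sigma(H)$.
   Context: Fix $a>0$. Let $\Gamma$ be the square-lattice graph in $\mathbb{R}^2$ with vertex set $\{(ma,na): m,n\in\mathbb{Z}\}$ and edges the segments of length $a$ joining two vertices that differ by $a$ in exactly one coordinate. The Hilbert space is $L^2(\Gamma)=\bigoplus_{e}L^2(e)$, and the operator acts as $-\frac{d^2}{dx^2}$ on each edge, with domain consisting of functions that are $W^{2,2}$ on each edge and satisfy, at every vertex $v$, $A\Psi_v+B\Psi'_v=0$. Here $\Psi_v\in\mathbb{C}^4$ is the vector of boundary values at $v$ on the four edges emanating from $v$, ordered as (left, right, lower, upper), and $\Psi'_v$ is the vector of derivatives at $v$ taken in the direction pointing away from $v$. The rank-three coupling is $$B_3=\begin{pmatrix}1&0&0&t_1\\0&1&0&t_2\\0&0&1&t_3\\0&0&0&0\end{pmatrix},\qquad A_3=-\begin{pmatrix}S&0\\-(\overline{t_1},\overline{t_2},\overline{t_3})&1\end{pmatrix},$$ where $S\in\mathbb{C}^{3\times3}$ is Hermitian and $t_j\in\mathbb{C}$; the same matrices are used at every vertex. *)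

theory Defs
  imports "HOL-Analysis.Analysis"
begin

text \<open>Edges of the square lattice with spacing a: (m,n,True) is the horizontal
edge from (m a, n a) to ((m+1) a, n a); (m,n,False) is the vertical edge from
(m a, n a) to (m a, (n+1) a).  Each edge is parametrised by x in [0,a], with x=0 at
the lower/left endpoint.\<close>

type_synonym edge = "int \<times> int \<times> bool"
type_synonym gfun = "edge \<Rightarrow> real \<Rightarrow> complex"

definition sq_int :: "real \<Rightarrow> (real \<Rightarrow> complex) \<Rightarrow> bool" where
  "sq_int a f \<longleftrightarrow> set_borel_measurable lborel {0..a} f \<and>
     set_integrable lborel {0..a} (\<lambda>x. (cmod (f x))\<^sup>2)"

definition edge_norm2 :: "real \<Rightarrow> (real \<Rightarrow> complex) \<Rightarrow> real" where
  "edge_norm2 a f = (LINT x:{0..a}|lborel. (cmod (f x))\<^sup>2)"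

definition L2G :: "real \<Rightarrow> gfun \<Rightarrow> bool" where
  "L2G a \<psi> \<longleftrightarrow> (\<forall>e. sq_int a (\<psi> e)) \<and> (\<lambda>e. edge_norm2 a (\<psi> e)) summable_on UNIV"

definition gnorm2 :: "real \<Rightarrow> gfun \<Rightarrow> real" where
  "gnorm2 a \<psi> = (\<Sum>\<^sub>\<infinity>e. edge_norm2 a (\<psi> e))"

text \<open>Rank-three coupling matrices (indices 0..3), ordering (left,right,lower,upper).\<close>
definition B3 :: "complex \<Rightarrow> complex \<Rightarrow> complex \<Rightarrow> nat \<Rightarrow> nat \<Rightarrow> complex" where
  "B3 t1 t2 t3 i j =
     (if i < 3 \<and> j < 3 then (if i = j then 1 else 0)
      else if i < 3 \<and> j = 3 then [t1, t2, t3] ! i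
      else 0)"

definition A3 :: "(nat \<Rightarrow> nat \<Rightarrow> complex) \<Rightarrow> complex \<Rightarrow> complex \<Rightarrow> complex \<Rightarrow> nat \<Rightarrow> nat \<Rightarrow> complex" where
  "A3 S t1 t2 t3 i j = - (if i < 3 \<and> j < 3 then S i j
      else if i < 3 \<and> j = 3 then 0
      else if i = 3 \<and> j < 3 then - cnj ([t1, t2, t3] ! j)
      else 1)"

text \<open>The operator H (acting as -d^2/dx^2 on each edge), given as its graph:
  lattice_op a A B psi h  means  psi in Dom(H) and H psi = h.
  Each psi e is W^{2,2} on [0,a], written as psi e x = c0 + c1 x - int_0^x (x-s) h e s
  with h e in L^2(0,a), so that psi e '' = - h e and psi e ' x = c1 - int_0^x h e.
  Vertex conditions A Psi_v + B Psi'_v = 0 with outgoing derivatives.\<close>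
definition lattice_op :: "real \<Rightarrow> (nat \<Rightarrow> nat \<Rightarrow> complex) \<Rightarrow> (nat \<Rightarrow> nat \<Rightarrow> complex)
     \<Rightarrow> gfun \<Rightarrow> gfun \<Rightarrow> bool" where
  "lattice_op a A B \<psi> h \<longleftrightarrow> L2G a \<psi> \<and> L2G a h \<and>
     (\<exists>c0 c1 :: edge \<Rightarrow> complex.
        (\<forall>e. \<forall>x\<in>{0..a}. \<psi> e x = c0 e + c1 e * of_real x
              - (LINT s:{0..x}|lborel. of_real (x - s) * h e s)) \<and>
        (\<forall>m n::int.
           let bv = [\<psi> (m-1,n,True) a, \<psi> (m,n,True) 0, \<psi> (m,n-1,False) a, \<psi> (m,n,False) 0];
               dv = [- (c1 (m-1,n,True) - (LINT s:{0..a}|lborel. h (m-1,n,True) s)),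
                     c1 (m,n,True),
                     - (c1 (m,n-1,False) - (LINT s:{0..a}|lborel. h (m,n-1,False) s)),
                     c1 (m,n,False)]
           in \<forall>i<4. (\<Sum>j<4. A i j * bv ! j + B i j * dv ! j) = 0))"

definition lattice_resolvent :: "real \<Rightarrow> (nat \<Rightarrow> nat \<Rightarrow> complex) \<Rightarrow> (nat \<Rightarrow> nat \<Rightarrow> complex)
     \<Rightarrow> complex \<Rightarrow> bool" where
  "lattice_resolvent a A B z \<longleftrightarrow>
     (\<forall>f. L2G a f \<longrightarrow> (\<exists>\<psi> h. lattice_op a A B \<psi> h \<and>
          (\<forall>e. AE x in lborel. x \<in> {0..a} \<longrightarrow> h e x - z * \<psi> e x = f e x))) \<and>
     (\<exists>C. \<forall>\<psi> h. lattice_op a A B \<psi> h \<longrightarrow>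
          gnorm2 a \<psi> \<le> C * gnorm2 a (\<lambda>e x. h e x - z * \<psi> e x))"

definition lattice_spectrum :: "real \<Rightarrow> (nat \<Rightarrow> nat \<Rightarrow> complex) \<Rightarrow> (nat \<Rightarrow> nat \<Rightarrow> complex)
     \<Rightarrow> complex set" where
  "lattice_spectrum a A B = {z. \<not> lattice_resolvent a A B z}"

end

theory Submission
  imports Defs
begin



lemma cont_set_integrable:
  fixes f :: "real \<Rightarrow> 'b::{banach, second_countable_topology}"
  assumes "continuous_on UNIV f"
  shows "set_integrable lborel {c..y} f"
  unfolding set_integrable_def
  by (rule borel_integrable_compact) (auto intro: continuous_on_subset[OF assms])

lemma ftc_lint:
  fixes f f' :: "real \<Rightarrow> complex"
  assumes d: "\<And>t. (f has_vector_derivative f' t) (at t)" and c: "continuous_on UNIV f'"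
    and y: "0 \<le> y"
  shows "(LINT s:{0..y}|lborel. f' s) = f y - f 0"
proof -
  have "(LINT s:{0..y}|lborel. f' s) = integral {0..y} f'"
    by (rule set_borel_integral_eq_integral(2)[OF cont_set_integrable[OF c]])
  also have "\<dots> = f y - f 0"
    by (rule integral_unique, rule fundamental_theorem_of_calculus[OF y])
       (auto intro: has_vector_derivative_at_within d)
  finally show ?thesis .
qed

lemma taylor2:
  fixes f f1 f2 :: "real \<Rightarrow> complex"
  assumes d1: "\<And>t. (f has_vector_derivative f1 t) (at t)"
    and d2: "\<And>t. (f1 has_vector_derivative f2 t) (at t)"
    and c: "continuous_on UNIV f2" and y: "0 \<le> y"
  shows "f y = f 0 + f1 0 * of_real y + (LINT s:{0..y}|lborel. of_real (y - s) * f2 s)"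
proof -
  define g where "g s = (y - s) *\<^sub>R f1 s + f s" for s
  have dg: "(g has_vector_derivative (of_real (y - s) * f2 s)) (at s)" for s
  proof -
    have "(g has_vector_derivative ((y - s) *\<^sub>R f2 s + (-1) *\<^sub>R f1 s + f1 s)) (at s)"
      unfolding g_def by (auto intro!: derivative_eq_intros d1 d2)
    thus ?thesis by (simp add: scaleR_conv_of_real)
  qed
  have c1: "continuous_on UNIV f1"
    using d2 by (meson continuous_at_imp_continuous_on has_vector_derivative_continuous)
  have cg: "continuous_on UNIV (\<lambda>s. of_real (y - s) * f2 s)"
    by (intro continuous_intros c)
  have "(LINT s:{0..y}|lborel. of_real (y - s) * f2 s) = g y - g 0"
    by (rule ftc_lint[OF dg cg y])
  thus ?thesis by (simp add: g_def scaleR_conv_of_real)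
qed


definition EE :: "real \<Rightarrow> real \<Rightarrow> complex" where
  "EE k x = exp (\<i> * (of_real k * of_real x))"
definition cp :: "real \<Rightarrow> real \<Rightarrow> real" where "cp b x = (1 + cos (b * x)) / 2"
definition cp1 :: "real \<Rightarrow> real \<Rightarrow> real" where "cp1 b x = - b * sin (b * x) / 2"
definition cp2 :: "real \<Rightarrow> real \<Rightarrow> real" where "cp2 b x = - (b^2) * cos (b * x) / 2"
definition FF :: "real \<Rightarrow> real \<Rightarrow> real \<Rightarrow> complex" where
  "FF b k x = of_real (cp b x) * EE k x"
definition FF1 :: "real \<Rightarrow> real \<Rightarrow> real \<Rightarrow> complex" where
  "FF1 b k x = of_real (cp1 b x) * EE k x + of_real (cp b x) * (\<i> * of_real k * EE k x)"
definition FF2 :: "real \<Rightarrow> real \<Rightarrow> real \<Rightarrow> complex" where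
  "FF2 b k x = of_real (cp2 b x) * EE k x + 2 * of_real (cp1 b x) * (\<i> * of_real k * EE k x)
     + of_real (cp b x) * (- of_real (k^2) * EE k x)"

lemma EE_d: "(EE k has_vector_derivative (\<i> * of_real k * EE k x)) (at x)"
proof -
  have "((\<lambda>z. exp (\<i> * (of_real k * z))) has_field_derivative (\<i> * of_real k * EE k x)) (at (of_real x))"
    by (auto intro!: derivative_eq_intros simp: EE_def)
  note d = this
  have e: "EE k = (\<lambda>x. exp (\<i> * (of_real k * of_real x)))" by (simp add: fun_eq_iff EE_def)
  show ?thesis using has_vector_derivative_real_field[OF d] by (simp add: e)
qed

lemma EE1_d: "((\<lambda>x. \<i> * of_real k * EE k x) has_vector_derivative (- of_real (k^2) * EE k x)) (at x)"
proof -
  have "((\<lambda>x. (\<i> * of_real k) * EE k x) has_vector_derivative ((\<i> * of_real k) * (\<i> * of_real k * EE k x))) (at x)"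
    by (auto intro!: derivative_eq_intros EE_d)
  thus ?thesis by (simp add: power2_eq_square algebra_simps)
qed

lemma cp_d: "(cp b has_real_derivative cp1 b x) (at x)"
  unfolding cp_def[abs_def] cp1_def by (auto intro!: derivative_eq_intros)
lemma cp1_d: "(cp1 b has_real_derivative cp2 b x) (at x)"
  unfolding cp1_def[abs_def] cp2_def by (auto intro!: derivative_eq_intros simp: power2_eq_square)

lemma FF_d: "(FF b k has_vector_derivative FF1 b k x) (at x)"
proof -
  have "((\<lambda>x. of_real (cp b x) * EE k x) has_vector_derivative
     (of_real (cp b x) * (\<i> * of_real k * EE k x) + of_real (cp1 b x) * EE k x)) (at x)"
    apply (rule has_vector_derivative_mult)
    apply (rule has_vector_derivative_of_real)
    apply (rule cp_d)
    apply (rule EE_d)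
    done
  thus ?thesis unfolding FF1_def FF_def[abs_def] by (simp add: algebra_simps)
qed


lemma FF1_d: "(FF1 b k has_vector_derivative FF2 b k x) (at x)"
proof -
  have d: "((\<lambda>x. of_real (cp1 b x) * EE k x + of_real (cp b x) * (\<i> * of_real k * EE k x)) has_vector_derivative
     ((of_real (cp1 b x) * (\<i> * of_real k * EE k x) + of_real (cp2 b x) * EE k x) +
      (of_real (cp b x) * (- of_real (k^2) * EE k x) + of_real (cp1 b x) * (\<i> * of_real k * EE k x)))) (at x)"
    apply (rule has_vector_derivative_add)
    apply (rule has_vector_derivative_mult)
    apply (rule has_vector_derivative_of_real)
    apply (rule cp1_d)
    apply (rule EE_d)
    apply (rule has_vector_derivative_mult)
    apply (rule has_vector_derivative_of_real)
    apply (rule cp_d)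
    apply (rule EE1_d)
    done
  have e1: "FF1 b k = (\<lambda>x. of_real (cp1 b x) * EE k x + of_real (cp b x) * (\<i> * of_real k * EE k x))"
    by (simp add: fun_eq_iff FF1_def)
  have e2: "FF2 b k x = (of_real (cp1 b x) * (\<i> * of_real k * EE k x) + of_real (cp2 b x) * EE k x) +
      (of_real (cp b x) * (- of_real (k^2) * EE k x) + of_real (cp1 b x) * (\<i> * of_real k * EE k x))"
    unfolding FF2_def by (simp add: algebra_simps)
  show ?thesis unfolding e1 e2 by (rule d)
qed

lemma EE_cont: "continuous_on UNIV (EE k)"
  unfolding EE_def[abs_def] by (intro continuous_intros)
lemma FF2_cont: "continuous_on UNIV (FF2 b k)"
  unfolding FF2_def[abs_def] cp_def cp1_def cp2_def EE_def by (auto intro!: continuous_intros)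
lemma FF_cont: "continuous_on UNIV (FF b k)"
  unfolding FF_def[abs_def] cp_def EE_def by (auto intro!: continuous_intros)

lemma norm_EE[simp]: "cmod (EE k x) = 1"
proof -
  have "\<i> * (of_real k * of_real x) = \<i> * of_real (k * x)" by simp
  thus ?thesis unfolding EE_def by (metis norm_exp_i_times)
qed


lemma rows_alg:
  fixes t1 t2 t3 w P c :: complex
  assumes n12: "cmod t1 = cmod t2" and n3: "cmod t3 = 1"
  shows "\<forall>i<4. (\<Sum>j<4. A3 (\<lambda>i j. 0) t1 t2 t3 i j * [w*(t1*P), w*(-t2*P), w*(t3*P), w*P] ! j
            + B3 t1 t2 t3 i j * [-(c*w*t1*P), c*w*(-t2*P), -(c*w*t3*P), c*w*P] ! j) = 0"
proof -
  have s4: "(\<Sum>j<4. f j) = f 0 + f 1 + f 2 + f 3" for f :: "nat \<Rightarrow> complex"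
    by (simp add: eval_nat_numeral)
  have i4: "i < 4 \<Longrightarrow> i = 0 \<or> i = 1 \<or> i = 2 \<or> i = 3" for i :: nat by auto
  have c1: "cnj t1 * t1 = cnj t2 * t2"
    using n12 by (metis complex_norm_square mult.commute)
  have c3: "cnj t3 * t3 = 1"
    using n3 by (metis complex_norm_square mult.commute of_real_1 power_one)
  have r3: "cnj t1 * (w * (t1 * P)) + cnj t2 * (w * (- t2 * P)) + cnj t3 * (w * (t3 * P)) - w * P = 0"
  proof -
    have "cnj t1 * (w * (t1 * P)) + cnj t2 * (w * (- t2 * P)) + cnj t3 * (w * (t3 * P)) - w * P
      = w * P * ((cnj t1 * t1) - (cnj t2 * t2) + (cnj t3 * t3) - 1)" by (simp add: algebra_simps)
    also have "\<dots> = 0" using c1 c3 by simp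
    finally show ?thesis .
  qed
  show ?thesis
    apply (intro allI impI)
    apply (drule i4)
    apply (elim disjE)
    using r3 by (simp_all add: s4 A3_def B3_def algebra_simps)
qed

context
  fixes a k :: real and t1 t2 t3 :: complex and N :: int
  assumes apos: "a > 0" and n12: "cmod t1 = cmod t2" and n3: "cmod t3 = 1"
begin

definition "bb = pi / a"
definition "eta = EE k a"
definition "om1 = (if t1 = 0 then 1 else - (eta * t2 / t1))"
definition "om2 = eta / t3"
definition kap :: "edge \<Rightarrow> complex" where
  "kap e = (case e of (m, n, d) \<Rightarrow> (if d then - t2 else 1) * om1 powi m * om2 powi n)"
definition wt :: "int \<times> int \<Rightarrow> complex" where
  "wt v = (if 0 \<le> fst v \<and> fst v < N \<and> 0 \<le> snd v \<and> snd v < N then 1 else 0)"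
definition tgt :: "edge \<Rightarrow> int \<times> int" where
  "tgt e = (case e of (m, n, d) \<Rightarrow> if d then (m + 1, n) else (m, n + 1))"
definition src :: "edge \<Rightarrow> int \<times> int" where
  "src e = (case e of (m, n, d) \<Rightarrow> (m, n))"
definition "Ac e = wt (src e) * kap e"
definition "Bc e = wt (tgt e) * kap e"
definition "Dc e = Ac e - Bc e"
definition psi :: gfun where "psi e x = Dc e * FF bb k x + Bc e * EE k x"
definition psi1 :: gfun where "psi1 e x = Dc e * FF1 bb k x + Bc e * (\<i> * of_real k * EE k x)"
definition psi2 :: gfun where "psi2 e x = Dc e * FF2 bb k x + Bc e * (- of_real (k^2) * EE k x)"
definition hh :: gfun where "hh e x = - psi2 e x"

lemma psi_d: "(psi e has_vector_derivative psi1 e x) (at x)"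
proof -
  have "((\<lambda>x. Dc e * FF bb k x + Bc e * EE k x) has_vector_derivative
      (Dc e * FF1 bb k x + Bc e * (\<i> * of_real k * EE k x))) (at x)"
    by (intro has_vector_derivative_add has_vector_derivative_mult_right FF_d EE_d)
  thus ?thesis unfolding psi_def[abs_def] psi1_def .
qed

lemma psi1_d: "(psi1 e has_vector_derivative psi2 e x) (at x)"
proof -
  have "((\<lambda>x. Dc e * FF1 bb k x + Bc e * (\<i> * of_real k * EE k x)) has_vector_derivative
      (Dc e * FF2 bb k x + Bc e * (- of_real (k^2) * EE k x))) (at x)"
    by (intro has_vector_derivative_add has_vector_derivative_mult_right FF1_d EE1_d)
  thus ?thesis unfolding psi1_def[abs_def] psi2_def .
qed

lemma psi2_cont: "continuous_on UNIV (psi2 e)"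
  unfolding psi2_def[abs_def] by (intro continuous_intros FF2_cont EE_cont)
lemma psi_cont: "continuous_on UNIV (psi e)"
  unfolding psi_def[abs_def] by (intro continuous_intros FF_cont EE_cont)
lemma hh_cont: "continuous_on UNIV (hh e)"
  unfolding hh_def[abs_def] by (intro continuous_intros psi2_cont)

lemma psi_taylor:
  assumes "0 \<le> x"
  shows "psi e x = psi e 0 + psi1 e 0 * of_real x - (LINT s:{0..x}|lborel. of_real (x - s) * hh e s)"
proof -
  have "(LINT s:{0..x}|lborel. of_real (x - s) * hh e s) = (LINT s:{0..x}|lborel. - (of_real (x - s) * psi2 e s))"
    by (simp add: hh_def)
  also have "\<dots> = - (LINT s:{0..x}|lborel. of_real (x - s) * psi2 e s)"
    by (rule set_integral_uminus, rule cont_set_integrable) (intro continuous_intros psi2_cont)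
  finally show ?thesis using taylor2[OF psi_d psi1_d psi2_cont assms] by simp
qed

lemma hh_int: "(LINT s:{0..a}|lborel. hh e s) = - (psi1 e a - psi1 e 0)"
proof -
  have "(LINT s:{0..a}|lborel. hh e s) = (LINT s:{0..a}|lborel. - psi2 e s)"
    by (simp add: hh_def)
  also have "\<dots> = - (LINT s:{0..a}|lborel. psi2 e s)"
    by (rule set_integral_uminus, rule cont_set_integrable) (intro continuous_intros psi2_cont)
  finally show ?thesis using ftc_lint[OF psi1_d psi2_cont, of a] apos by simp
qed

lemma EE0: "EE k 0 = 1" by (simp add: EE_def)
lemma FF0: "FF bb k 0 = 1" by (simp add: FF_def cp_def EE0)
lemma FFa: "FF bb k a = 0"
proof -
  have "bb * a = pi" using apos by (simp add: bb_def)
  thus ?thesis by (simp add: FF_def cp_def)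
qed
lemma FF1_0: "FF1 bb k 0 = \<i> * of_real k" by (simp add: FF1_def cp_def cp1_def EE0)
lemma FF1a: "FF1 bb k a = 0"
proof -
  have "bb * a = pi" using apos by (simp add: bb_def)
  thus ?thesis by (simp add: FF1_def cp_def cp1_def)
qed

lemma psi_0: "psi e 0 = Ac e" by (simp add: psi_def FF0 EE0 Dc_def)
lemma psi_a: "psi e a = Bc e * eta" by (simp add: psi_def FFa eta_def)
lemma psi1_0: "psi1 e 0 = \<i> * of_real k * Ac e" by (simp add: psi1_def FF1_0 EE0 Dc_def algebra_simps)
lemma psi1_a: "psi1 e a = \<i> * of_real k * eta * Bc e" by (simp add: psi1_def FF1a eta_def algebra_simps)



lemma eta_nz: "eta \<noteq> 0" by (simp add: eta_def EE_def)
lemma t3_nz: "t3 \<noteq> 0" using n3 by auto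
lemma om1_nz: "om1 \<noteq> 0"
  using eta_nz n12 by (auto simp: om1_def)
lemma om2_nz: "om2 \<noteq> 0"
  using eta_nz t3_nz by (simp add: om2_def)

lemma hL: "kap (m - 1, n, True) * eta = t1 * (om1 powi m * om2 powi n)"
proof (cases "t1 = 0")
  case True
  then have "t2 = 0" using n12 by simp
  thus ?thesis unfolding kap_def using True by simp
next
  case False
  then have t2: "t2 \<noteq> 0" using n12 by auto
  have p: "om1 powi (m - 1) = om1 powi m / om1"
    using om1_nz by (simp add: power_int_diff)
  have o: "om1 = - (eta * t2 / t1)" using False by (simp add: om1_def)
  have key: "- t2 * eta / om1 = t1" unfolding o using False t2 eta_nz by (simp add: field_simps)
  have "kap (m - 1, n, True) * eta = (- t2 * eta / om1) * (om1 powi m * om2 powi n)"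
    by (simp add: kap_def p)
  thus ?thesis unfolding key .
qed

lemma hD: "kap (m, n - 1, False) * eta = t3 * (om1 powi m * om2 powi n)"
proof -
  have "om2 powi (n - 1) = om2 powi n / om2"
    using om2_nz by (simp add: power_int_diff)
  thus ?thesis using t3_nz eta_nz om2_nz
    by (simp add: kap_def om2_def field_simps)
qed


lemma vertex:
  fixes m n :: int
  shows "let bv = [psi (m-1,n,True) a, psi (m,n,True) 0, psi (m,n-1,False) a, psi (m,n,False) 0];
             dv = [- (psi1 (m-1,n,True) 0 - (LINT s:{0..a}|lborel. hh (m-1,n,True) s)),
                   psi1 (m,n,True) 0,
                   - (psi1 (m,n-1,False) 0 - (LINT s:{0..a}|lborel. hh (m,n-1,False) s)),
                   psi1 (m,n,False) 0]
         in \<forall>i<4. (\<Sum>j<4. A3 (\<lambda>i j. 0) t1 t2 t3 i j * bv ! j + B3 t1 t2 t3 i j * dv ! j) = 0"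
proof -
  define w where "w = wt (m, n)"
  define P where "P = om1 powi m * om2 powi n"
  define c where "c = \<i> * complex_of_real k"
  have tL: "tgt (m-1,n,True) = (m,n)" by (simp add: tgt_def)
  have tD: "tgt (m,n-1,False) = (m,n)" by (simp add: tgt_def)
  have sR: "src (m,n,True) = (m,n)" by (simp add: src_def)
  have sU: "src (m,n,False) = (m,n)" by (simp add: src_def)
  have kR: "kap (m,n,True) = - t2 * P" by (simp add: kap_def P_def)
  have kU: "kap (m,n,False) = P" by (simp add: kap_def P_def)
  have b0: "psi (m-1,n,True) a = w * (t1 * P)"
    unfolding psi_a Bc_def tL using hL[of m n] by (simp add: w_def P_def mult.assoc)
  have b1: "psi (m,n,True) 0 = w * (- t2 * P)"
    unfolding psi_0 Ac_def sR kR w_def ..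
  have b2: "psi (m,n-1,False) a = w * (t3 * P)"
    unfolding psi_a Bc_def tD using hD[of m n] by (simp add: w_def P_def mult.assoc)
  have b3: "psi (m,n,False) 0 = w * P"
    unfolding psi_0 Ac_def sU kU w_def ..
  have d0: "- (psi1 (m-1,n,True) 0 - (LINT s:{0..a}|lborel. hh (m-1,n,True) s)) = - (c * w * t1 * P)"
  proof -
    have "- (psi1 (m-1,n,True) 0 - (LINT s:{0..a}|lborel. hh (m-1,n,True) s)) = - psi1 (m-1,n,True) a"
      unfolding hh_int by simp
    also have "\<dots> = - (c * w * (kap (m-1,n,True) * eta))"
      unfolding psi1_a Bc_def tL by (simp add: c_def w_def algebra_simps)
    finally show ?thesis unfolding hL P_def by (simp add: algebra_simps)
  qed
  have d1: "psi1 (m,n,True) 0 = c * w * (- t2 * P)"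
    unfolding psi1_0 Ac_def sR kR by (simp add: c_def w_def)
  have d2: "- (psi1 (m,n-1,False) 0 - (LINT s:{0..a}|lborel. hh (m,n-1,False) s)) = - (c * w * t3 * P)"
  proof -
    have "- (psi1 (m,n-1,False) 0 - (LINT s:{0..a}|lborel. hh (m,n-1,False) s)) = - psi1 (m,n-1,False) a"
      unfolding hh_int by simp
    also have "\<dots> = - (c * w * (kap (m,n-1,False) * eta))"
      unfolding psi1_a Bc_def tD by (simp add: c_def w_def algebra_simps)
    finally show ?thesis unfolding hD P_def by (simp add: algebra_simps)
  qed
  have d3: "psi1 (m,n,False) 0 = c * w * P"
    unfolding psi1_0 Ac_def sU kU by (simp add: c_def w_def)
  show ?thesis unfolding Let_def b0 b1 b2 b3 d0 d1 d2 d3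
    by (rule rows_alg[OF n12 n3])
qed

lemma sq_int_cont:
  assumes "continuous_on UNIV f"
  shows "sq_int a' f"
proof -
  have "set_integrable lborel {0..a'} f" by (rule cont_set_integrable[OF assms])
  hence m: "set_borel_measurable lborel {0..a'} f"
    unfolding set_integrable_def set_borel_measurable_def by (rule borel_measurable_integrable)
  have "set_integrable lborel {0..a'} (\<lambda>x. (cmod (f x))\<^sup>2)"
    by (rule cont_set_integrable) (intro continuous_intros assms)
  with m show ?thesis unfolding sq_int_def by simp
qed

lemma L2G_fin:
  assumes "\<And>e. continuous_on UNIV (g e)" "finite S" "\<And>e. e \<notin> S \<Longrightarrow> g e = (\<lambda>x. 0)"
  shows "L2G a' g"
proof -
  have "(\<lambda>e. edge_norm2 a' (g e)) summable_on S" using assms(2) by simp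
  moreover have "(\<lambda>e. edge_norm2 a' (g e)) summable_on S \<longleftrightarrow> (\<lambda>e. edge_norm2 a' (g e)) summable_on UNIV"
    by (rule summable_on_cong_neutral) (auto simp: assms(3) edge_norm2_def)
  ultimately show ?thesis unfolding L2G_def using sq_int_cont assms(1) by auto
qed

definition "S0 = {-1..N} \<times> {-1..N} \<times> (UNIV :: bool set)"

lemma S0_fin: "finite S0" unfolding S0_def by simp

lemma out_S0: "e \<notin> S0 \<Longrightarrow> Ac e = 0 \<and> Bc e = 0"
  by (cases e) (auto simp: S0_def Ac_def Bc_def wt_def tgt_def src_def)

lemma psi_out: "e \<notin> S0 \<Longrightarrow> psi e = (\<lambda>x. 0)"
  using out_S0 by (auto simp: psi_def Dc_def fun_eq_iff)
lemma hh_out: "e \<notin> S0 \<Longrightarrow> hh e = (\<lambda>x. 0)"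
  using out_S0 by (auto simp: hh_def psi2_def Dc_def fun_eq_iff)

lemma op: "lattice_op a (A3 (\<lambda>i j. 0) t1 t2 t3) (B3 t1 t2 t3) psi hh"
  unfolding lattice_op_def
  apply (intro conjI)
    prefer 3
    apply (rule exI[of _ "\<lambda>e. psi e 0"], rule exI[of _ "\<lambda>e. psi1 e 0"], intro conjI)
proof -
  show "L2G a psi" by (rule L2G_fin[OF psi_cont S0_fin psi_out])
  show "L2G a hh" by (rule L2G_fin[OF hh_cont S0_fin hh_out])
  show "\<forall>e. \<forall>x\<in>{0..a}. psi e x = psi e 0 + psi1 e 0 * complex_of_real x -
           (LINT s:{0..x}|lborel. complex_of_real (x - s) * hh e s)"
  proof (intro allI ballI)
    fix e x assume "x \<in> {0..a}"
    thus "psi e x = psi e 0 + psi1 e 0 * complex_of_real x -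
           (LINT s:{0..x}|lborel. complex_of_real (x - s) * hh e s)"
      by (intro psi_taylor) auto
  qed
  show "\<forall>m n. let bv = [psi (m-1,n,True) a, psi (m,n,True) 0, psi (m,n-1,False) a, psi (m,n,False) 0];
             dv = [- (psi1 (m-1,n,True) 0 - (LINT s:{0..a}|lborel. hh (m-1,n,True) s)),
                   psi1 (m,n,True) 0,
                   - (psi1 (m,n-1,False) 0 - (LINT s:{0..a}|lborel. hh (m,n-1,False) s)),
                   psi1 (m,n,False) 0]
         in \<forall>i<4. (\<Sum>j<4. A3 (\<lambda>i j. 0) t1 t2 t3 i j * bv ! j + B3 t1 t2 t3 i j * dv ! j) = 0"
    by (intro allI, rule vertex)
qed

definition "QQ = edge_norm2 a (\<lambda>x. FF2 bb k x + of_real (k^2) * FF bb k x)"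

lemma edge_norm2_nonneg: "0 \<le> edge_norm2 a' f"
  unfolding edge_norm2_def set_lebesgue_integral_def by (auto intro!: integral_nonneg_AE)

lemma QQ_nonneg: "0 \<le> QQ" unfolding QQ_def by (rule edge_norm2_nonneg)

lemma err_edge: "edge_norm2 a (\<lambda>x. hh e x - of_real (k^2) * psi e x) = (cmod (Dc e))^2 * QQ"
proof -
  have "\<And>x. hh e x - of_real (k^2) * psi e x = - Dc e * (FF2 bb k x + of_real (k^2) * FF bb k x)"
    by (simp add: hh_def psi2_def psi_def algebra_simps)
  hence "\<And>x. (cmod (hh e x - of_real (k^2) * psi e x))\<^sup>2 = (cmod (Dc e))^2 * (cmod (FF2 bb k x + of_real (k^2) * FF bb k x))\<^sup>2"
    by (simp add: norm_mult power_mult_distrib)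
  thus ?thesis unfolding edge_norm2_def QQ_def by simp
qed

lemma norm_eta: "cmod eta = 1" by (simp add: eta_def)
lemma norm_om1: "cmod om1 = 1"
proof (cases "t1 = 0")
  case False
  have "t2 \<noteq> 0" using n12 False by (metis norm_eq_zero)
  thus ?thesis using n12 False by (simp add: om1_def norm_mult norm_divide norm_eta)
qed (unfold om1_def, simp)
lemma norm_om2: "cmod om2 = 1" using n3 by (simp add: om2_def norm_divide norm_eta)

lemma norm_kap: "cmod (kap (m, n, d)) = (if d then cmod t2 else 1)"
  by (simp add: kap_def norm_mult norm_power_int norm_om1 norm_om2)

definition "MM = 1 + (cmod t2)^2"

lemma MM_nonneg: "0 \<le> MM" by (simp add: MM_def)

lemma Dc_bound: "(cmod (Dc e))^2 \<le> MM"
proof -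
  obtain m n d where e: "e = (m, n, d)" by (cases e) auto
  have w: "cmod (wt (src e) - wt (tgt e)) \<le> 1" by (simp add: wt_def)
  have "cmod (Dc e) = cmod (wt (src e) - wt (tgt e)) * cmod (kap e)"
    by (simp add: Dc_def Ac_def Bc_def norm_mult[symmetric] algebra_simps)
  also have "\<dots> \<le> cmod (kap e)" using w by (simp add: mult_left_le_one_le)
  finally have "(cmod (Dc e))^2 \<le> (cmod (kap e))^2" by (simp add: power_mono)
  also have "\<dots> \<le> MM" by (simp add: e norm_kap MM_def)
  finally show ?thesis .
qed

definition "Bd = ({-1, N-1} \<times> {0..<N} \<times> {True}) \<union> ({0..<N} \<times> {-1, N-1} \<times> {False})"

lemma Dc_out: "e \<notin> Bd \<Longrightarrow> Dc e = 0"
  by (cases e) (auto simp: Bd_def Dc_def Ac_def Bc_def wt_def tgt_def src_def split: if_splits)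

lemma card2: "card {u, v :: int} \<le> 2" by (cases "u = v") auto

lemma card_Bd: "N \<ge> 0 \<Longrightarrow> real (card Bd) \<le> 4 * of_int N"
proof -
  assume N: "N \<ge> 0"
  have "card Bd \<le> card ({-1, N-1} \<times> {0..<N} \<times> {True}) + card ({0..<N} \<times> {-1, N-1} \<times> {False})"
    unfolding Bd_def by (rule card_Un_le)
  also have "\<dots> = card {-1, N-1} * nat N + nat N * card {-1, N-1}"
    by (simp only: card_cartesian_product card_atLeastLessThan_int card_1_singleton_iff) simp
  also have "\<dots> \<le> 2 * nat N + nat N * 2"
    using card2[of "-1" "N-1"] by (intro add_mono mult_mono) auto
  finally have "card Bd \<le> 4 * nat N" by simp
  hence "real (card Bd) \<le> real (4 * nat N)" by linarith
  thus ?thesis using N by simp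
qed

lemma fin_Bd: "finite Bd" unfolding Bd_def by simp

lemma upper: "N \<ge> 0 \<Longrightarrow> gnorm2 a (\<lambda>e x. hh e x - of_real (k^2) * psi e x) \<le> 4 * of_int N * MM * QQ"
proof -
  assume N: "N \<ge> 0"
  let ?g = "\<lambda>e. edge_norm2 a (\<lambda>x. hh e x - of_real (k^2) * psi e x)"
  have "gnorm2 a (\<lambda>e x. hh e x - of_real (k^2) * psi e x) = infsum ?g UNIV"
    unfolding gnorm2_def ..
  also have "\<dots> = infsum ?g Bd"
  proof (rule infsum_cong_neutral)
    fix x assume "x \<in> UNIV - Bd"
    thus "?g x = 0" by (subst err_edge) (simp add: Dc_out)
  qed auto
  also have "\<dots> = sum ?g Bd" using fin_Bd by simp
  also have "\<dots> \<le> sum (\<lambda>_. MM * QQ) Bd"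
    by (rule sum_mono, subst err_edge) (simp add: mult_right_mono Dc_bound QQ_nonneg)
  also have "\<dots> = real (card Bd) * (MM * QQ)" by simp
  also have "\<dots> \<le> (4 * of_int N) * (MM * QQ)"
    by (rule mult_right_mono[OF card_Bd[OF N]]) (simp add: MM_def QQ_nonneg)
  finally show ?thesis by (simp add: mult.assoc)
qed

definition "VV = {0..<N} \<times> {0..<N-1} \<times> {False}"

lemma in_VV: "e \<in> VV \<Longrightarrow> edge_norm2 a (psi e) = a"
proof -
  assume "e \<in> VV"
  then obtain m n where e: "e = (m, n, False)" and mn: "0 \<le> m" "m < N" "0 \<le> n" "n < N - 1"
    unfolding VV_def by auto
  have "Dc e = 0" "Bc e = kap e" using mn by (auto simp: e Dc_def Ac_def Bc_def wt_def tgt_def src_def)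
  hence "\<And>x. (cmod (psi e x))\<^sup>2 = 1" by (simp add: psi_def norm_mult e norm_kap)
  hence "edge_norm2 a (psi e) = (LINT x:{0..a}|lborel. (1::real))" by (simp add: edge_norm2_def)
  also have "\<dots> = a" using apos by (simp add: set_integral_const)
  finally show ?thesis .
qed

lemma lower: "N \<ge> 1 \<Longrightarrow> a * of_int N * of_int (N - 1) \<le> gnorm2 a psi"
proof -
  assume N: "N \<ge> 1"
  have "a * of_int N * of_int (N - 1) = sum (\<lambda>_. a) VV"
    using N by (simp add: VV_def card_cartesian_product)
  also have "\<dots> = infsum (\<lambda>_. a) VV" by (simp add: VV_def)
  also have "\<dots> \<le> infsum (\<lambda>e. edge_norm2 a (psi e)) UNIV"
  proof (rule infsum_mono_neutral)
    show "(\<lambda>_. a) summable_on VV" by (simp add: VV_def)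
    show "(\<lambda>e. edge_norm2 a (psi e)) summable_on UNIV" using op unfolding lattice_op_def L2G_def by blast
  qed (auto simp: in_VV edge_norm2_nonneg)
  finally show ?thesis unfolding gnorm2_def .
qed

end

theorem mainTheorem10:
  fixes a :: real and t1 t2 t3 :: complex
  assumes "a > 0" and "cmod t1 = cmod t2" and "cmod t3 = 1"
  shows "{complex_of_real x | x. x \<ge> 0} \<subseteq>
           lattice_spectrum a (A3 (\<lambda>i j. 0) t1 t2 t3) (B3 t1 t2 t3)"
proof
  fix z assume "z \<in> {complex_of_real x | x. x \<ge> 0}"
  then obtain x where z: "z = complex_of_real x" and x: "x \<ge> 0" by auto
  define k where "k = sqrt x"
  have zk: "z = complex_of_real (k^2)" using x by (simp add: z k_def)
  define M where "M = MM t2"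
  define Q where "Q = QQ a k"
  have M0: "M \<ge> 0" unfolding M_def by (rule MM_nonneg[OF assms])
  have Q0: "Q \<ge> 0" unfolding Q_def by (rule QQ_nonneg[OF assms])
  show "z \<in> lattice_spectrum a (A3 (\<lambda>i j. 0) t1 t2 t3) (B3 t1 t2 t3)"
    unfolding lattice_spectrum_def lattice_resolvent_def
  proof (clarify)
    fix C
    assume bnd: "\<forall>\<psi> h. lattice_op a (A3 (\<lambda>i j. 0) t1 t2 t3) (B3 t1 t2 t3) \<psi> h \<longrightarrow>
          gnorm2 a \<psi> \<le> C * gnorm2 a (\<lambda>e x. h e x - z * \<psi> e x)"
    define N :: int where "N = \<lceil>4 * \<bar>C\<bar> * M * Q / a\<rceil> + 2"
    have N1: "N \<ge> 1" unfolding N_def using M0 Q0 assms(1)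
      by (smt (verit) ceiling_mono ceiling_zero divide_nonneg_pos mult_nonneg_nonneg abs_ge_zero)
    have NQ: "real_of_int (N - 1) > 4 * \<bar>C\<bar> * M * Q / a" unfolding N_def
      by (smt (verit) le_of_int_ceiling of_int_add of_int_1 of_int_diff)
    let ?p = "psi a k t1 t2 t3 N" and ?h = "hh a k t1 t2 t3 N"
    let ?err = "gnorm2 a (\<lambda>e x. ?h e x - z * ?p e x)"
    have opN: "lattice_op a (A3 (\<lambda>i j. 0) t1 t2 t3) (B3 t1 t2 t3) ?p ?h"
      by (rule op[OF assms])
    have lo: "a * of_int N * of_int (N - 1) \<le> gnorm2 a ?p"
      by (rule lower[OF assms N1])
    have up: "?err \<le> 4 * of_int N * M * Q"
      using upper[OF assms, of N k] N1 unfolding zk M_def Q_def by simp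
    have e0: "?err \<ge> 0" unfolding gnorm2_def
      by (rule infsum_nonneg) (rule edge_norm2_nonneg[OF assms])
    have "gnorm2 a ?p \<le> C * ?err" using bnd opN by blast
    also have "\<dots> \<le> \<bar>C\<bar> * ?err" using e0 by (simp add: mult_right_mono)
    also have "\<dots> \<le> \<bar>C\<bar> * (4 * of_int N * M * Q)" using up by (simp add: mult_left_mono)
    finally have A: "gnorm2 a ?p \<le> \<bar>C\<bar> * (4 * of_int N * M * Q)" .
    have "a * of_int (N - 1) > 4 * \<bar>C\<bar> * M * Q"
      using NQ assms(1) by (simp add: pos_divide_less_eq mult.commute)
    hence "of_int N * (a * of_int (N - 1)) > of_int N * (4 * \<bar>C\<bar> * M * Q)"
      using N1 by (intro mult_strict_left_mono) auto
    hence "a * of_int N * of_int (N - 1) > \<bar>C\<bar> * (4 * of_int N * M * Q)"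
      by (simp add: algebra_simps)
    with lo A show False by linarith
  qed
qed

end
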